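(* For every $n\in\mathbb{N}$, every formula $\varphi$ of $\mathbf{CPN}_n$ whose propositional letters are among $p_1,\dots,p_m$, and every valuation $\mathcal V$: $\;p_1^{\mathcal V},\dots,p_m^{\mathcal V}\vdash_{(n)}\varphi^{\mathcal V}$.
   Context: Fix $n\in\mathbb{N}$, $n\ge 1$, and write $[n]=\{1,\dots,n\}$. Chains: a chain over $[n]$ is a finite sequence of distinct elements of $[n]$; chains with the same length and the same symbols are identified, so a chain is effectively a subset of $[n]$. $c_k$ denotes a chain with $k$ symbols, $\epsilon$ the empty chain, and $(n)$ the chain consisting of all symbols of $[n]$. For chains $c,d$: the concatenation $c\cdot d$ is the chain of symbols occurring in $c$ or in $d$; the coconcatenation $c\otimes d$ is the chain of symbols occurring in exactly one of $c,d$; $d$ is a subchain of $c$ if every symbol of $d$ is a symbol of $c$. The complementary chain $c'_{n-k}$ of $c_k$ is the chain of the symbols of $[n]$ not occurring in $c_k$. Language of $\mathbf{CPN}_n$: a countable set $P_n$ of propositional letters; constants $\perp_c$ for each chain $c$ over $[n]$ with $1\le |c|\le n-1$, and constants $\perp_{(n)}$ (contradiction) and $\top_{(n)}$ (truth); a unary connective $\neg_c$ for each nonempty chain $c$ over $[n]$ ($\neg_{(n)}$ is the strong negation; the $\neg_c$ with $|c|\le n-1$ are weak negations); a binary connective $\to_{(n)}$. Formulas: propositional letters and constants are formulas; if $\varphi,\psi$ are formulas then so are $\neg_c\varphi$ and $(\varphi\to_{(n)}\psi)$. Conventions: $\neg_\epsilon\varphi:=\varphi$, $\perp_\epsilon:=\top_{(n)}$,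 and $\perp_c$ for $c=(n)$ means $\perp_{(n)}$. Abbreviations: $\varphi\wedge_{(n)}\psi:=\neg_{(n)}(\varphi\to_{(n)}\neg_{(n)}\psi)$, $\varphi\vee_{(n)}\psi:=\neg_{(n)}\varphi\to_{(n)}\psi$, $\varphi\leftrightarrow_{(n)}\psi:=(\varphi\to_{(n)}\psi)\wedge_{(n)}(\psi\to_{(n)}\varphi)$. Axioms of $\mathbf{CPN}_n$, for all formulas $\varphi,\psi,\chi$ and all nonempty chains $c_k,c_r$ over $[n]$: (A1) $\varphi\to_{(n)}(\psi\to_{(n)}\varphi)$; (A2) $(\varphi\to_{(n)}(\psi\to_{(n)}\chi))\to_{(n)}((\varphi\to_{(n)}\psi)\to_{(n)}(\varphi\to_{(n)}\chi))$; (A3) $(\neg_{(n)}\psi\to_{(n)}\neg_{(n)}\varphi)\to_{(n)}((\neg_{(n)}\psi\to_{(n)}\varphi)\to_{(n)}\psi)$; (A4) $\varphi\to_{(n)}(\perp_{c_k}\to_{(n)}\neg_{c_k}\varphi)$; (A5) $\neg_{c_k}\neg_{c_r}\varphi\leftrightarrow_{(n)}\neg_{c_k\otimes c_r}\varphi$; (A6) $\neg_{c_k}\perp_{c_r}\leftrightarrow_{(n)}\perp_{c_k\otimes c_r}$; (A7) $\perp_{c_k}\to_{(n)}\perp_{c_r}$, whenever $c_r$ is a subchain of $c_k$. The only rule of inference is modus ponens (from $\varphi$ and $\varphi\to_{(n)}\psi$ infer $\psi$). For a set $\Sigma$ of formulas, $\Sigma\vdash_{(n)}\varphi$ means there is a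 finite sequence of formulas ending with $\varphi$, each of which is an axiom, a member of $\Sigma$, or obtained from two earlier members by modus ponens; $\vdash_{(n)}\varphi$ means $\emptyset\vdash_{(n)}\varphi$. Semantics: for each $i\in[n]$ there is a world $\mathcal M_i=\{T_i,F_i\}$ (pairwise disjoint sets). A valuation $\mathcal V$ assigns to each propositional letter $p$ and each $i\in[n]$ a value $v_i(p)\in\mathcal M_i$ (independently for different $i$). It extends to all formulas, for each $i$, by: $\bar v_i(p)=v_i(p)$ for letters; $\bar v_i(\perp_c)=F_i$ if $i$ is a symbol of $c$ and $T_i$ otherwise (so $\bar v_i(\perp_{(n)})=F_i$ and $\bar v_i(\top_{(n)})=T_i$); $\bar v_i(\neg_c\varphi)=\bar v_i(\varphi)$ if $i$ is not a symbol of $c$, and the opposite value ($T_i\leftrightarrow F_i$) if $i$ is a symbol of $c$; $\bar v_i(\varphi\to_{(n)}\psi)=F_i$ iff $\bar v_i(\varphi)=T_i$ and $\bar v_i(\psi)=F_i$, otherwise $T_i$ (hence $\wedge_{(n)},\vee_{(n)}$ behave classically in each world). Write $\bar{\mathcal V}(\varphi)=(\bar v_1(\varphi),\dots,\bar v_n(\varphi))$. A formula $\varphi$ is a tautology, written $\models_{(n)}\varphi$, iff $\bar{\mathcal V}(\varphi)=(T_1,\dots,T_n)$ for every valuation $\mathcal V$. Given a valuation $\mathcal V$ and a chain $c$ over $[n]$ (possibly empty), a formula $\varphi$ is $c$-contingent (under $\mathcal V$) if $\bar v_i(\varphi)=F_i$ for every symbol $i$ of $c$ and $\bar v_i(\varphi)=T_i$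 for every $i\in[n]$ not in $c$. Every formula is $c$-contingent for exactly one chain $c$, and one sets $\varphi^{\mathcal V}:=\neg_c\varphi$ for that $c$ (so $\varphi^{\mathcal V}=\varphi$ when $\bar{\mathcal V}(\varphi)=(T_1,\dots,T_n)$). *)

theory Defs
  imports Main
begin

text \<open>Chains over [n] are represented by subsets of {1..n}.
  Constants: Bot c with c \<subseteq> {1..n}; Bot {} is \<top>_(n), Bot {1..n} is \<bottom>_(n).
  Weak/strong negations: Neg c with c a nonempty subset of {1..n}.\<close>

datatype form = Letter nat | Bot "nat set" | Neg "nat set" form | Imp form form

fun letters :: "form \<Rightarrow> nat set" where
  "letters (Letter p) = {p}"
| "letters (Bot c) = {}"
| "letters (Neg c a) = letters a"
| "letters (Imp a b) = letters a \<union> letters b"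

fun wf :: "nat \<Rightarrow> form \<Rightarrow> bool" where
  "wf n (Letter p) = True"
| "wf n (Bot c) = (c \<subseteq> {1..n})"
| "wf n (Neg c a) = (c \<noteq> {} \<and> c \<subseteq> {1..n} \<and> wf n a)"
| "wf n (Imp a b) = (wf n a \<and> wf n b)"

definition neg :: "nat set \<Rightarrow> form \<Rightarrow> form" where
  "neg c a = (if c = {} then a else Neg c a)"

definition coconc :: "nat set \<Rightarrow> nat set \<Rightarrow> nat set" where
  "coconc c d = (c - d) \<union> (d - c)"

definition sneg :: "nat \<Rightarrow> form \<Rightarrow> form" where
  "sneg n a = Neg {1..n} a"

definition conj :: "nat \<Rightarrow> form \<Rightarrow> form \<Rightarrow> form" where
  "conj n a b = sneg n (Imp a (sneg n b))"

definition iff :: "nat \<Rightarrow> form \<Rightarrow> form \<Rightarrow> form" where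
  "iff n a b = conj n (Imp a b) (Imp b a)"

inductive axiom :: "nat \<Rightarrow> form \<Rightarrow> bool" for n :: nat where
  A1: "\<lbrakk>wf n a; wf n b\<rbrakk> \<Longrightarrow> axiom n (Imp a (Imp b a))"
| A2: "\<lbrakk>wf n a; wf n b; wf n c\<rbrakk> \<Longrightarrow>
        axiom n (Imp (Imp a (Imp b c)) (Imp (Imp a b) (Imp a c)))"
| A3: "\<lbrakk>wf n a; wf n b\<rbrakk> \<Longrightarrow>
        axiom n (Imp (Imp (sneg n b) (sneg n a)) (Imp (Imp (sneg n b) a) b))"
| A4: "\<lbrakk>wf n a; ck \<noteq> {}; ck \<subseteq> {1..n}\<rbrakk> \<Longrightarrow>
        axiom n (Imp a (Imp (Bot ck) (neg ck a)))"
| A5: "\<lbrakk>wf n a; ck \<noteq> {}; ck \<subseteq> {1..n}; cr \<noteq> {}; cr \<subseteq> {1..n}\<rbrakk> \<Longrightarrow>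
        axiom n (iff n (neg ck (neg cr a)) (neg (coconc ck cr) a))"
| A6: "\<lbrakk>ck \<noteq> {}; ck \<subseteq> {1..n}; cr \<noteq> {}; cr \<subseteq> {1..n}\<rbrakk> \<Longrightarrow>
        axiom n (iff n (neg ck (Bot cr)) (Bot (coconc ck cr)))"
| A7: "\<lbrakk>ck \<noteq> {}; ck \<subseteq> {1..n}; cr \<noteq> {}; cr \<subseteq> ck\<rbrakk> \<Longrightarrow>
        axiom n (Imp (Bot ck) (Bot cr))"

inductive deriv :: "nat \<Rightarrow> form set \<Rightarrow> form \<Rightarrow> bool" for n :: nat and S :: "form set" where
  ax: "axiom n a \<Longrightarrow> deriv n S a"
| hyp: "a \<in> S \<Longrightarrow> deriv n S a"
| mp: "\<lbrakk>deriv n S a; deriv n S (Imp a b)\<rbrakk> \<Longrightarrow> deriv n S b"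

text \<open>Valuations: V p i = True means v_i(p) = T_i.\<close>
fun eval :: "(nat \<Rightarrow> nat \<Rightarrow> bool) \<Rightarrow> nat \<Rightarrow> form \<Rightarrow> bool" where
  "eval V i (Letter p) = V p i"
| "eval V i (Bot c) = (i \<notin> c)"
| "eval V i (Neg c a) = (if i \<in> c then \<not> eval V i a else eval V i a)"
| "eval V i (Imp a b) = (eval V i a \<longrightarrow> eval V i b)"

text \<open>The unique chain c for which a is c-contingent under V.\<close>
definition contchain :: "nat \<Rightarrow> (nat \<Rightarrow> nat \<Rightarrow> bool) \<Rightarrow> form \<Rightarrow> nat set" where
  "contchain n V a = {i \<in> {1..n}. \<not> eval V i a}"

definition vmod :: "nat \<Rightarrow> (nat \<Rightarrow> nat \<Rightarrow> bool) \<Rightarrow> form \<Rightarrow> form" where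
  "vmod n V a = neg (contchain n V a) a"

end

theory Submission
  imports Defs
begin


lemma wf_neg[simp]: "wf n (neg c a) = (if c = {} then wf n a else c \<subseteq> {1..n} \<and> wf n a)"
  by (simp add: neg_def)
lemma wf_sneg[simp]: "1 \<le> n \<Longrightarrow> wf n (sneg n a) = wf n a" by (simp add: sneg_def)
lemma coconc_sub: "c \<subseteq> {1..n} \<Longrightarrow> d \<subseteq> {1..n} \<Longrightarrow> coconc c d \<subseteq> {1..n}"
  by (auto simp: coconc_def)
lemma wf_conj[simp]: "1 \<le> n \<Longrightarrow> wf n (conj n a b) = (wf n a \<and> wf n b)" by (simp add: conj_def)
lemma wf_iff[simp]: "1 \<le> n \<Longrightarrow> wf n (iff n a b) = (wf n a \<and> wf n b)" by (auto simp add: iff_def)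

lemma axiom_wf: "axiom n a \<Longrightarrow> 1 \<le> n \<Longrightarrow> wf n a"
  by (induction rule: axiom.induct) (auto simp: coconc_def)

lemma deriv_wf: "deriv n S a \<Longrightarrow> 1 \<le> n \<Longrightarrow> \<forall>y\<in>S. wf n y \<Longrightarrow> wf n a"
  by (induction rule: deriv.induct) (auto dest: axiom_wf)

lemma weak: "deriv n S a \<Longrightarrow> S \<subseteq> S' \<Longrightarrow> deriv n S' a"
  by (induction rule: deriv.induct) (auto intro: deriv.intros)

lemma AX1: "wf n a \<Longrightarrow> wf n b \<Longrightarrow> deriv n S (Imp a (Imp b a))"
  by (intro deriv.ax axiom.A1)
lemma AX2: "wf n a \<Longrightarrow> wf n b \<Longrightarrow> wf n c \<Longrightarrow>
   deriv n S (Imp (Imp a (Imp b c)) (Imp (Imp a b) (Imp a c)))"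
  by (intro deriv.ax axiom.A2)
lemma AX3: "wf n a \<Longrightarrow> wf n b \<Longrightarrow>
   deriv n S (Imp (Imp (sneg n b) (sneg n a)) (Imp (Imp (sneg n b) a) b))"
  by (intro deriv.ax axiom.A3)

lemma MP: "deriv n S a \<Longrightarrow> deriv n S (Imp a b) \<Longrightarrow> deriv n S b" by (rule deriv.mp)

lemma ident: "wf n a \<Longrightarrow> deriv n S (Imp a a)"
proof -
  assume w: "wf n a"
  have "deriv n S (Imp (Imp a (Imp (Imp a a) a)) (Imp (Imp a (Imp a a)) (Imp a a)))"
    using w by (intro AX2) auto
  moreover have "deriv n S (Imp a (Imp (Imp a a) a))" using w by (intro AX1) auto
  moreover have "deriv n S (Imp a (Imp a a))" using w by (intro AX1) auto
  ultimately show ?thesis by (meson MP)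
qed

lemma ded:
  assumes "deriv n (insert A S) B" "wf n A" "\<forall>y\<in>S. wf n y" "1 \<le> n"
  shows "deriv n S (Imp A B)"
  using assms(1)
proof (induction rule: deriv.induct)
  case (ax a)
  then have "wf n a" using axiom_wf assms by blast
  then show ?case using AX1[of n a A S] MP deriv.ax ax assms by blast
next
  case (hyp a)
  show ?case
  proof (cases "a = A")
    case True then show ?thesis using ident assms by blast
  next
    case False then have "a \<in> S" using hyp by auto
    then show ?thesis using AX1[of n a A S] MP deriv.hyp assms by blast
  qed
next
  case (mp a b)
  have W: "\<forall>y\<in>insert A S. wf n y" using assms by auto
  have "wf n a" "wf n b" using deriv_wf[OF mp(1) assms(4) W] deriv_wf[OF mp(2) assms(4) W] by auto
  then show ?case using AX2[of n A a b S] mp(3,4) assms MP by blast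
qed


definition ok :: "nat \<Rightarrow> form set \<Rightarrow> bool" where
  "ok n S = (1 \<le> n \<and> (\<forall>y\<in>S. wf n y))"

lemma okI: "ok n S \<Longrightarrow> wf n A \<Longrightarrow> ok n (insert A S)" by (auto simp: ok_def)
lemma okn: "ok n S \<Longrightarrow> 1 \<le> n" by (auto simp: ok_def)
lemma okS: "ok n S \<Longrightarrow> \<forall>y\<in>S. wf n y" by (auto simp: ok_def)
lemma dedo: "ok n S \<Longrightarrow> deriv n (insert A S) B \<Longrightarrow> wf n A \<Longrightarrow> deriv n S (Imp A B)"
  using ded okn okS by blast
lemma hypI: "deriv n (insert A S) A" by (rule deriv.hyp) simp
lemma wk: "deriv n S a \<Longrightarrow> deriv n (insert A S) a" using weak by blast

lemma T5: "ok n S \<Longrightarrow> deriv n S (Imp (sneg n z) z) \<Longrightarrow> wf n z \<Longrightarrow> deriv n S z"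
proof -
  assume a: "ok n S" "deriv n S (Imp (sneg n z) z)" "wf n z"
  have n1: "1 \<le> n" using a okn by blast
  have "deriv n S (Imp (sneg n z) (sneg n z))" using ident[of n "sneg n z" S] n1 a by simp
  from MP[OF this AX3[of n z z S]] have "deriv n S (Imp (Imp (sneg n z) z) z)" using a by simp
  from MP[OF a(2) this] show ?thesis .
qed

lemma expl: "ok n S \<Longrightarrow> deriv n S x \<Longrightarrow> deriv n S (sneg n x) \<Longrightarrow> wf n x \<Longrightarrow> wf n y \<Longrightarrow> deriv n S y"
proof -
  assume a: "ok n S" "deriv n S x" "deriv n S (sneg n x)" "wf n x" "wf n y"
  have n1: "1 \<le> n" using a okn by blast
  have 1: "deriv n S (Imp (sneg n y) (sneg n x))" using MP[OF a(3) AX1[of n "sneg n x" "sneg n y"]] a n1 by simp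
  have 2: "deriv n S (Imp (sneg n y) x)" using MP[OF a(2) AX1[of n x "sneg n y"]] a n1 by simp
  show ?thesis using MP[OF 2 MP[OF 1 AX3[of n x y S]]] a by simp
qed

lemma dne: "ok n S \<Longrightarrow> deriv n S (sneg n (sneg n x)) \<Longrightarrow> wf n x \<Longrightarrow> deriv n S x"
proof -
  assume a: "ok n S" "deriv n S (sneg n (sneg n x))" "wf n x"
  have n1: "1 \<le> n" using a okn by blast
  let ?S = "insert (sneg n x) S"
  have W: "ok n ?S" using okI a n1 by simp
  have "deriv n ?S x"
    by (rule expl[OF W hypI wk[OF a(2)]]) (use a n1 in simp)+
  then have "deriv n S (Imp (sneg n x) x)" using dedo a n1 by simp
  then show ?thesis using T5 a by blast
qed

lemma contra: "ok n S \<Longrightarrow> deriv n S (Imp a b) \<Longrightarrow> wf n a \<Longrightarrow> wf n b \<Longrightarrow> deriv n S (Imp (sneg n b) (sneg n a))"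
proof -
  assume a: "ok n S" "deriv n S (Imp a b)" "wf n a" "wf n b"
  have n1: "1 \<le> n" using a okn by blast
  let ?S1 = "insert (sneg n b) S"
  let ?S2 = "insert (sneg n (sneg n a)) ?S1"
  have W1: "ok n ?S1" using okI a n1 by simp
  have W2: "ok n ?S2" using okI[OF W1] a n1 by simp
  have "deriv n ?S2 a" by (rule dne[OF W2 hypI]) (use a in simp)
  then have "deriv n ?S2 b" by (rule MP[OF _ wk[OF wk[OF a(2)]]])
  then have "deriv n ?S2 (sneg n a)"
    by (rule expl[OF W2 _ wk[OF hypI]]) (use a n1 in simp)+
  then have "deriv n ?S1 (Imp (sneg n (sneg n a)) (sneg n a))" by (rule dedo[OF W1]) (use a n1 in simp)
  then have "deriv n ?S1 (sneg n a)" by (rule T5[OF W1]) (use a n1 in simp)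
  then show ?thesis by (rule dedo[OF a(1)]) (use a n1 in simp)
qed

lemma cases: "ok n S \<Longrightarrow> deriv n S (Imp a y) \<Longrightarrow> deriv n S (Imp (sneg n a) y) \<Longrightarrow> wf n a \<Longrightarrow> wf n y \<Longrightarrow> deriv n S y"
proof -
  assume a: "ok n S" "deriv n S (Imp a y)" "deriv n S (Imp (sneg n a) y)" "wf n a" "wf n y"
  have n1: "1 \<le> n" using a okn by blast
  let ?S1 = "insert (sneg n y) S"
  have W1: "ok n ?S1" using okI a n1 by simp
  have "deriv n S (Imp (sneg n y) (sneg n a))" by (rule contra[OF a(1,2,4,5)])
  then have "deriv n ?S1 (sneg n a)" by (rule MP[OF hypI wk])
  then have "deriv n ?S1 y" by (rule MP[OF _ wk[OF a(3)]])
  then have "deriv n S (Imp (sneg n y) y)" by (rule dedo[OF a(1)]) (use a n1 in simp)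
  then show ?thesis by (rule T5[OF a(1)]) (use a in simp)
qed

lemma impI_neg: "ok n S \<Longrightarrow> deriv n S (sneg n a) \<Longrightarrow> wf n a \<Longrightarrow> wf n b \<Longrightarrow> deriv n S (Imp a b)"
proof -
  assume a: "ok n S" "deriv n S (sneg n a)" "wf n a" "wf n b"
  let ?S1 = "insert a S"
  have W1: "ok n ?S1" using okI a by simp
  have "deriv n ?S1 b" by (rule expl[OF W1 hypI wk[OF a(2)]]) (use a in simp)+
  then show ?thesis by (rule dedo[OF a(1)]) (use a in simp)
qed

lemma impI_pos: "deriv n S b \<Longrightarrow> wf n a \<Longrightarrow> wf n b \<Longrightarrow> deriv n S (Imp a b)"
  by (rule MP[OF _ AX1])

lemma neg_imp: "ok n S \<Longrightarrow> deriv n S a \<Longrightarrow> deriv n S (sneg n b) \<Longrightarrow> wf n a \<Longrightarrow> wf n b \<Longrightarrow> deriv n S (sneg n (Imp a b))"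
proof -
  assume a: "ok n S" "deriv n S a" "deriv n S (sneg n b)" "wf n a" "wf n b"
  have n1: "1 \<le> n" using a okn by blast
  let ?S1 = "insert (sneg n (sneg n (Imp a b))) S"
  have W1: "ok n ?S1" using okI a n1 by simp
  have "deriv n ?S1 (Imp a b)" by (rule dne[OF W1 hypI]) (use a in simp)
  then have "deriv n ?S1 b" by (rule MP[OF wk[OF a(2)]])
  then have "deriv n ?S1 (sneg n (Imp a b))"
    by (rule expl[OF W1 _ wk[OF a(3)]]) (use a n1 in simp)+
  then have "deriv n S (Imp (sneg n (sneg n (Imp a b))) (sneg n (Imp a b)))"
    by (rule dedo[OF a(1)]) (use a n1 in simp)
  then show ?thesis by (rule T5[OF a(1)]) (use a n1 in simp)
qed

lemma conjE1: "ok n S \<Longrightarrow> deriv n S (conj n x y) \<Longrightarrow> wf n x \<Longrightarrow> wf n y \<Longrightarrow> deriv n S x"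
proof -
  assume a: "ok n S" "deriv n S (conj n x y)" "wf n x" "wf n y"
  have n1: "1 \<le> n" using a okn by blast
  let ?S1 = "insert (sneg n x) S"
  have W1: "ok n ?S1" using okI a n1 by simp
  have "deriv n ?S1 (Imp x (sneg n y))" by (rule impI_neg[OF W1 hypI]) (use a n1 in simp)+
  then have "deriv n S (Imp (sneg n x) (Imp x (sneg n y)))" by (rule dedo[OF a(1)]) (use a n1 in simp)
  then have "deriv n S (Imp (sneg n (Imp x (sneg n y))) (sneg n (sneg n x)))"
    by (rule contra[OF a(1)]) (use a n1 in simp)+
  then have "deriv n S (sneg n (sneg n x))" by (rule MP[OF a(2)[unfolded conj_def]])
  then show ?thesis by (rule dne[OF a(1)]) (use a in simp)
qed

lemma conjE2: "ok n S \<Longrightarrow> deriv n S (conj n x y) \<Longrightarrow> wf n x \<Longrightarrow> wf n y \<Longrightarrow> deriv n S y"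
proof -
  assume a: "ok n S" "deriv n S (conj n x y)" "wf n x" "wf n y"
  have n1: "1 \<le> n" using a okn by blast
  have "deriv n S (Imp (sneg n y) (Imp x (sneg n y)))" by (rule AX1) (use a n1 in simp)+
  then have "deriv n S (Imp (sneg n (Imp x (sneg n y))) (sneg n (sneg n y)))"
    by (rule contra[OF a(1)]) (use a n1 in simp)+
  then have "deriv n S (sneg n (sneg n y))" by (rule MP[OF a(2)[unfolded conj_def]])
  then show ?thesis by (rule dne[OF a(1)]) (use a in simp)
qed

lemma iffD1: "ok n S \<Longrightarrow> deriv n S (iff n a b) \<Longrightarrow> deriv n S a \<Longrightarrow> wf n a \<Longrightarrow> wf n b \<Longrightarrow> deriv n S b"
proof -
  assume a: "ok n S" "deriv n S (iff n a b)" "deriv n S a" "wf n a" "wf n b"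
  have "deriv n S (Imp a b)" by (rule conjE1[OF a(1) a(2)[unfolded iff_def]]) (use a in simp)+
  then show ?thesis by (rule MP[OF a(3)])
qed
lemma iffD2: "ok n S \<Longrightarrow> deriv n S (iff n a b) \<Longrightarrow> deriv n S b \<Longrightarrow> wf n a \<Longrightarrow> wf n b \<Longrightarrow> deriv n S a"
proof -
  assume a: "ok n S" "deriv n S (iff n a b)" "deriv n S b" "wf n a" "wf n b"
  have "deriv n S (Imp b a)" by (rule conjE2[OF a(1) a(2)[unfolded iff_def]]) (use a in simp)+
  then show ?thesis by (rule MP[OF a(3)])
qed


lemma neg_empty[simp]: "neg {} x = x" by (simp add: neg_def)
lemma sneg_neg: "1 \<le> n \<Longrightarrow> sneg n x = neg {1..n} x" by (simp add: neg_def sneg_def)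
lemma coconc_empty[simp]: "coconc {} r = r" "coconc r {} = r" by (auto simp: coconc_def)

lemma N1: "ok n S \<Longrightarrow> k \<subseteq> {1..n} \<Longrightarrow> r \<subseteq> {1..n} \<Longrightarrow> wf n x \<Longrightarrow>
  deriv n S (neg k (neg r x)) \<Longrightarrow> deriv n S (neg (coconc k r) x)"
proof -
  assume a: "ok n S" "k \<subseteq> {1..n}" "r \<subseteq> {1..n}" "wf n x" "deriv n S (neg k (neg r x))"
  have n1: "1 \<le> n" using a okn by blast
  show ?thesis
  proof (cases "k = {} \<or> r = {}")
    case True then show ?thesis using a by auto
  next
    case False
    have "axiom n (iff n (neg k (neg r x)) (neg (coconc k r) x))" using False a by (intro axiom.A5) auto
    from iffD1[OF a(1) deriv.ax[OF this] a(5)] show ?thesis using a n1 coconc_sub[of k n r] by auto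
  qed
qed

lemma N2: "ok n S \<Longrightarrow> k \<subseteq> {1..n} \<Longrightarrow> r \<subseteq> {1..n} \<Longrightarrow> wf n x \<Longrightarrow>
  deriv n S (neg (coconc k r) x) \<Longrightarrow> deriv n S (neg k (neg r x))"
proof -
  assume a: "ok n S" "k \<subseteq> {1..n}" "r \<subseteq> {1..n}" "wf n x" "deriv n S (neg (coconc k r) x)"
  have n1: "1 \<le> n" using a okn by blast
  show ?thesis
  proof (cases "k = {} \<or> r = {}")
    case True then show ?thesis using a by auto
  next
    case False
    have "axiom n (iff n (neg k (neg r x)) (neg (coconc k r) x))" using False a by (intro axiom.A5) auto
    from iffD2[OF a(1) deriv.ax[OF this] a(5)] show ?thesis using a n1 coconc_sub[of k n r] by auto
  qed
qed

lemma bot_step: "ok n S \<Longrightarrow> j \<in> {1..n} \<Longrightarrow> deriv n S (Bot {j}) \<Longrightarrow> c \<subseteq> {1..n} \<Longrightarrow> wf n x \<Longrightarrow>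
   deriv n S (neg c x) \<Longrightarrow> deriv n S (neg (coconc {j} c) x)"
proof -
  assume a: "ok n S" "j \<in> {1..n}" "deriv n S (Bot {j})" "c \<subseteq> {1..n}" "wf n x" "deriv n S (neg c x)"
  have "axiom n (Imp (neg c x) (Imp (Bot {j}) (neg {j} (neg c x))))" using a by (intro axiom.A4) auto
  from MP[OF a(3) MP[OF a(6) deriv.ax[OF this]]] have "deriv n S (neg {j} (neg c x))" .
  then show ?thesis using N1[OF a(1)] a by auto
qed

lemma reduce: "finite D \<Longrightarrow> ok n S \<Longrightarrow> D \<subseteq> {1..n} \<Longrightarrow> \<forall>j\<in>D. deriv n S (Bot {j}) \<Longrightarrow>
  c \<subseteq> {1..n} \<Longrightarrow> wf n x \<Longrightarrow> deriv n S (neg c x) \<Longrightarrow> deriv n S (neg (coconc c D) x)"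
proof (induction D rule: finite_induct)
  case empty then show ?case by simp
next
  case (insert j D)
  have "deriv n S (neg (coconc c D) x)" using insert by auto
  moreover have "coconc c D \<subseteq> {1..n}" using insert coconc_sub[of c n D] by auto
  ultimately have "deriv n S (neg (coconc {j} (coconc c D)) x)" using bot_step[OF insert(4)] insert by auto
  moreover have "coconc {j} (coconc c D) = coconc c (insert j D)" using insert(2) by (auto simp: coconc_def)
  ultimately show ?case by simp
qed

lemma world: "ok n S \<Longrightarrow> i \<in> {1..n} \<Longrightarrow> deriv n S (Bot ({1..n} - {i})) \<Longrightarrow> c \<subseteq> {1..n} \<Longrightarrow> d \<subseteq> {1..n} \<Longrightarrow>
  coconc c d \<subseteq> {1..n} - {i} \<Longrightarrow> wf n x \<Longrightarrow> deriv n S (neg c x) \<Longrightarrow> deriv n S (neg d x)"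
proof -
  assume a: "ok n S" "i \<in> {1..n}" "deriv n S (Bot ({1..n} - {i}))" "c \<subseteq> {1..n}" "d \<subseteq> {1..n}"
     "coconc c d \<subseteq> {1..n} - {i}" "wf n x" "deriv n S (neg c x)"
  have B: "\<forall>j\<in>coconc c d. deriv n S (Bot {j})"
  proof
    fix j assume j: "j \<in> coconc c d"
    have "axiom n (Imp (Bot ({1..n} - {i})) (Bot {j}))" using a(6) j by (intro axiom.A7) auto
    from MP[OF a(3) deriv.ax[OF this]] show "deriv n S (Bot {j})" .
  qed
  have "finite (coconc c d)" using a(6) finite_subset by blast
  from reduce[OF this a(1) _ B a(4) a(7,8)] a(6)
  have "deriv n S (neg (coconc c (coconc c d)) x)" by auto
  moreover have "coconc c (coconc c d) = d" by (auto simp: coconc_def)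
  ultimately show ?thesis by simp
qed

lemma top: "ok n S \<Longrightarrow> deriv n S (Bot {})"
proof -
  assume a: "ok n S"
  have n1: "1 \<le> n" using a okn by blast
  let ?B = "Bot {1..n}"
  let ?S1 = "insert ?B S"
  have W1: "ok n ?S1" using okI a by simp
  have "axiom n (Imp ?B (Imp ?B (neg {1..n} ?B)))" using n1 by (intro axiom.A4) auto
  from MP[OF hypI MP[OF hypI deriv.ax[OF this]]]
  have "deriv n ?S1 (sneg n ?B)" using n1 by (simp add: sneg_neg)
  then have I: "deriv n S (Imp ?B (sneg n ?B))" by (rule dedo[OF a]) simp
  let ?S2 = "insert (sneg n (sneg n ?B)) S"
  have W2: "ok n ?S2" using okI a n1 by simp
  have "deriv n ?S2 ?B" by (rule dne[OF W2 hypI]) simp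
  from MP[OF this wk[OF I]] have "deriv n ?S2 (sneg n ?B)" .
  then have "deriv n S (Imp (sneg n (sneg n ?B)) (sneg n ?B))" by (rule dedo[OF a]) (use n1 in simp)
  then have "deriv n S (sneg n ?B)" by (rule T5[OF a]) (use n1 in simp)
  then have nB: "deriv n S (neg {1..n} ?B)" using n1 by (simp add: sneg_neg)
  have "axiom n (iff n (neg {1..n} ?B) (Bot (coconc {1..n} {1..n})))" using n1 by (intro axiom.A6) auto
  from iffD1[OF a deriv.ax[OF this] nB] n1 show ?thesis by (simp add: coconc_def)
qed

lemma botself: "ok n S \<Longrightarrow> c \<noteq> {} \<Longrightarrow> c \<subseteq> {1..n} \<Longrightarrow> deriv n S (neg c (Bot c))"
proof -
  assume a: "ok n S" "c \<noteq> {}" "c \<subseteq> {1..n}"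
  have "axiom n (iff n (neg c (Bot c)) (Bot (coconc c c)))" using a by (intro axiom.A6) auto
  moreover have "coconc c c = {}" by (simp add: coconc_def)
  ultimately have "deriv n S (iff n (neg c (Bot c)) (Bot {}))" using deriv.ax by simp
  from iffD2[OF a(1) this top[OF a(1)]] a okn[OF a(1)] show ?thesis by simp
qed


lemma combine: "ok n S \<Longrightarrow> wf n X \<Longrightarrow> \<forall>i\<in>{1..n}. deriv n S (Imp (Bot ({1..n} - {i})) X) \<Longrightarrow> deriv n S X"
proof -
  assume a: "ok n S" "wf n X" "\<forall>i\<in>{1..n}. deriv n S (Imp (Bot ({1..n} - {i})) X)"
  have n1: "1 \<le> n" using a okn by blast
  show ?thesis
  proof (cases "n = 1")
    case True
    then have "deriv n S (Imp (Bot {}) X)" using a(3) by auto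
    from MP[OF top[OF a(1)] this] show ?thesis .
  next
    case False
    then have n2: "2 \<le> n" using n1 by auto
    let ?S1 = "insert (sneg n X) S"
    have W1: "ok n ?S1" using okI a n1 by simp
    have B: "\<forall>i\<in>{1..n}. deriv n ?S1 (Bot {i})"
    proof
      fix i assume i: "i \<in> {1..n}"
      have wG: "wf n (Bot ({1..n} - {i}))" by auto
      have "deriv n S (Imp (sneg n X) (sneg n (Bot ({1..n} - {i}))))"
        by (rule contra[OF a(1)]) (use a i in auto)
      from MP[OF hypI wk[OF this]]
      have G: "deriv n ?S1 (neg {1..n} (Bot ({1..n} - {i})))" using n1 by (simp add: sneg_neg)
      have ne: "{1..n} - {i} \<noteq> {}"
      proof
        assume "{1..n} - {i} = {}"
        then have "{1..n} \<subseteq> {i}" by auto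
        moreover have "(1::nat) \<in> {1..n}" "(2::nat) \<in> {1..n}" using n2 by auto
        ultimately have "(1::nat) \<in> {i}" "(2::nat) \<in> {i}" by blast+
        then show False by simp
      qed
      have "axiom n (iff n (neg {1..n} (Bot ({1..n} - {i}))) (Bot (coconc {1..n} ({1..n} - {i}))))"
        using n1 ne by (intro axiom.A6) auto
      moreover have "coconc {1..n} ({1..n} - {i}) = {i}" using i by (auto simp: coconc_def)
      ultimately have "deriv n ?S1 (iff n (neg {1..n} (Bot ({1..n} - {i}))) (Bot {i}))"
        using deriv.ax by simp
      from iffD1[OF W1 this G] i n1 show "deriv n ?S1 (Bot {i})" by simp
    qed
    have "deriv n ?S1 (neg {1..n} X)" using hypI n1 by (simp add: sneg_neg)
    from reduce[OF _ W1 _ B _ a(2) this] have "deriv n ?S1 (neg (coconc {1..n} {1..n}) X)" by simp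
    then have "deriv n ?S1 X" by (simp add: coconc_def)
    then have "deriv n S (Imp (sneg n X) X)" by (rule dedo[OF a(1)]) (use a n1 in simp)
    then show ?thesis by (rule T5[OF a(1)]) (use a in simp)
  qed
qed

lemma cc_sub: "contchain n V a \<subseteq> {1..n}" by (auto simp: contchain_def)
lemma cc_Bot: "c \<subseteq> {1..n} \<Longrightarrow> contchain n V (Bot c) = c" by (auto simp: contchain_def)
lemma cc_Neg: "d \<subseteq> {1..n} \<Longrightarrow> contchain n V (Neg d a) = coconc (contchain n V a) d"
  by (auto simp: contchain_def coconc_def)
lemma cc_Imp: "contchain n V (Imp a b) = contchain n V b - contchain n V a"
  by (auto simp: contchain_def)


lemma main: "ok n S \<Longrightarrow> \<forall>p\<in>letters phi. deriv n S (vmod n V (Letter p)) \<Longrightarrow> wf n phi \<Longrightarrow>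
  deriv n S (vmod n V phi)"
proof (induction phi)
  case (Letter p) then show ?case by simp
next
  case (Bot c)
  then have c: "c \<subseteq> {1..n}" by simp
  show ?case
  proof (cases "c = {}")
    case True then show ?thesis using top[OF Bot(1)] c by (simp add: vmod_def cc_Bot)
  next
    case False then show ?thesis using botself[OF Bot(1) False c] c by (simp add: vmod_def cc_Bot)
  qed
next
  case (Neg d a)
  have d: "d \<noteq> {}" "d \<subseteq> {1..n}" and wa: "wf n a" using Neg by auto
  let ?ca = "contchain n V a"
  have IH: "deriv n S (neg ?ca a)" using Neg by (simp add: vmod_def)
  have "coconc (coconc ?ca d) d = ?ca" by (auto simp: coconc_def)
  with IH have "deriv n S (neg (coconc (coconc ?ca d) d) a)" by simp
  from N2[OF Neg(2) _ d(2) wa this] have "deriv n S (neg (coconc ?ca d) (neg d a))"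
    using coconc_sub[OF cc_sub d(2)] by blast
  then show ?case using d by (simp add: vmod_def cc_Neg neg_def[of d])
next
  case (Imp a b)
  have n1: "1 \<le> n" using Imp okn by blast
  have wa: "wf n a" and wb: "wf n b" using Imp by auto
  let ?ca = "contchain n V a"
  let ?cb = "contchain n V b"
  let ?e = "?cb - ?ca"
  have IHa: "deriv n S (neg ?ca a)" using Imp by (simp add: vmod_def)
  have IHb: "deriv n S (neg ?cb b)" using Imp by (simp add: vmod_def)
  have ca: "?ca \<subseteq> {1..n}" and cb: "?cb \<subseteq> {1..n}" by (rule cc_sub)+
  have e: "?e \<subseteq> {1..n}" using cb by auto
  have wi: "wf n (Imp a b)" using wa wb by simp
  have "\<forall>i\<in>{1..n}. deriv n S (Imp (Bot ({1..n} - {i})) (neg ?e (Imp a b)))"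
  proof
    fix i assume i: "i \<in> {1..n}"
    let ?G = "Bot ({1..n} - {i})"
    let ?S1 = "insert ?G S"
    have W1: "ok n ?S1" using okI Imp(3) by auto
    have G: "deriv n ?S1 ?G" by (rule hypI)
    have a1: "deriv n ?S1 (neg ?ca a)" using wk[OF IHa] .
    have b1: "deriv n ?S1 (neg ?cb b)" using wk[OF IHb] .
    have "deriv n ?S1 (neg ?e (Imp a b))"
    proof (cases "i \<in> ?ca")
      case True
      have "deriv n ?S1 (neg {1..n} a)"
        by (rule world[OF W1 i G ca _ _ wa a1]) (use True ca cb i in \<open>auto simp: coconc_def\<close>)
      then have "deriv n ?S1 (sneg n a)" using n1 by (simp add: sneg_neg)
      from impI_neg[OF W1 this wa wb] have "deriv n ?S1 (neg {} (Imp a b))" by simp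
      note I = this
      show ?thesis
        by (rule world[OF W1 i G _ e _ wi I]) (use True ca cb i in \<open>auto simp: coconc_def\<close>)
    next
      case F: False
      show ?thesis
      proof (cases "i \<in> ?cb")
        case False
        have "deriv n ?S1 (neg {} b)"
          by (rule world[OF W1 i G cb _ _ wb b1]) (use False ca cb i in \<open>auto simp: coconc_def\<close>)
        from impI_pos[OF this[simplified] wa wb] have "deriv n ?S1 (neg {} (Imp a b))" by simp
        note I = this
        show ?thesis
          by (rule world[OF W1 i G _ e _ wi I]) (use False ca cb i in \<open>auto simp: coconc_def\<close>)
      next
        case True
        have "deriv n ?S1 (neg {} a)"
          by (rule world[OF W1 i G ca _ _ wa a1]) (use F ca cb i in \<open>auto simp: coconc_def\<close>)
        then have A: "deriv n ?S1 a" by simp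
        have "deriv n ?S1 (neg {1..n} b)"
          by (rule world[OF W1 i G cb _ _ wb b1]) (use True ca cb i in \<open>auto simp: coconc_def\<close>)
        then have "deriv n ?S1 (sneg n b)" using n1 by (simp add: sneg_neg)
        from neg_imp[OF W1 A this wa wb] have "deriv n ?S1 (neg {1..n} (Imp a b))"
          using n1 by (simp add: sneg_neg)
        note I = this
        show ?thesis
          by (rule world[OF W1 i G _ e _ wi I]) (use True F ca cb i in \<open>auto simp: coconc_def\<close>)
      qed
    qed
    then show "deriv n S (Imp ?G (neg ?e (Imp a b)))" by (rule dedo[OF Imp(3)]) auto
  qed
  from combine[OF Imp(3) _ this] wi e n1 have "deriv n S (neg ?e (Imp a b))" by auto
  then show ?case by (simp add: vmod_def cc_Imp)
qed

theorem mainTheorem14: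
  fixes n :: nat and phi :: form and L :: "nat set" and V :: "nat \<Rightarrow> nat \<Rightarrow> bool"
  assumes "n \<ge> 1" and "wf n phi" and "finite L" and "letters phi \<subseteq> L"
  shows "deriv n {vmod n V (Letter p) | p. p \<in> L} (vmod n V phi)"
proof -
  let ?S = "{vmod n V (Letter p) | p. p \<in> L}"
  have "ok n ?S" using assms(1) cc_sub[of n V] by (auto simp: ok_def vmod_def)
  moreover have "\<forall>p\<in>letters phi. deriv n ?S (vmod n V (Letter p))"
    using assms(4) by (auto intro: deriv.hyp)
  ultimately show ?thesis using main assms(2) by blast
qed

end
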